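(* Let $(X,\mu)$ be a non-atomic probability measure space equipped with a tree $\mathcal{T}$, with associated dyadic maximal operator $\mathcal{M}_{\mathcal{T}}$. For every $q$ with $0<q<1$ and every $f,h$ with $0<h\le f^q$, $$\int_X(\mathcal{M}_{\mathcal{T}}\phi)^q\,d\mu\le h\,\omega_q\Big(\frac{f^q}{h}\Big)$$ for every $\phi\in L^1(X,\mu)$ with $\phi\ge0$, $\int_X\phi\,d\mu=f$, $\int_X\phi^q\,d\mu=h$.
   Context: A set $\mathcal{T}$ of measurable subsets of $X$ is a tree if: (i) $X\in\mathcal{T}$ and $\mu(I)>0$ for every $I\in\mathcal{T}$; (ii) for every $I\in\mathcal{T}$ there is a finite or countable set $C(I)\subseteq\mathcal{T}$ with at least two elements, consisting of pairwise disjoint subsets of $I$ whose union is $I$; (iii) $\mathcal{T}=\bigcup_{m\ge0}\mathcal{T}_{(m)}$ where $\mathcal{T}_{(0)}=\{X\}$ and $\mathcal{T}_{(m+1)}=\bigcup_{I\in\mathcal{T}_{(m)}}C(I)$; (iv) $\lim_{m\to\infty}\sup_{I\in\mathcal{T}_{(m)}}\mu(I)=0$. The dyadic maximal operator is $\mathcal{M}_{\mathcal{T}}\phi(x)=\sup\{\frac{1}{\mu(I)}\int_I|\phi|\,d\mu : x\in I\in\mathcal{T}\}$. Here $\omega_q(z)=[H_q^{-1}(z)]^q$ for $z\ge1$, where $H_q(z)=(1-q)z^q+qz^{q-1}$ on $[1,\infty)$ (a strictly increasing bijection onto $[1,\infty)$). *)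

theory Defs
  imports "HOL-Probability.Probability"
begin

definition non_atomic :: "'a measure \<Rightarrow> bool" where
  "non_atomic M \<longleftrightarrow> \<not> (\<exists>A\<in>sets M. emeasure M A > 0 \<and>
     (\<forall>B\<in>sets M. B \<subseteq> A \<longrightarrow> emeasure M B = 0 \<or> emeasure M (A - B) = 0))"

fun tree_level :: "('a set \<Rightarrow> 'a set set) \<Rightarrow> 'a set \<Rightarrow> nat \<Rightarrow> 'a set set" where
  "tree_level C X 0 = {X}"
| "tree_level C X (Suc m) = \<Union> (C ` tree_level C X m)"

definition is_tree :: "'a measure \<Rightarrow> 'a set set \<Rightarrow> bool" where
  "is_tree M T \<longleftrightarrow> (\<exists>C.
     space M \<in> T \<and> (\<forall>I\<in>T. I \<in> sets M \<and> measure M I > 0) \<and>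
     (\<forall>I\<in>T. C I \<subseteq> T \<and> countable (C I) \<and> (\<exists>J K. J \<in> C I \<and> K \<in> C I \<and> J \<noteq> K) \<and>
             disjoint (C I) \<and> (\<forall>J\<in>C I. J \<subseteq> I) \<and> \<Union> (C I) = I) \<and>
     T = (\<Union>m. tree_level C (space M) m) \<and>
     ((\<lambda>m. SUP I\<in>tree_level C (space M) m. measure M I) \<longlonglongrightarrow> 0))"

definition dyadic_max :: "'a measure \<Rightarrow> 'a set set \<Rightarrow> ('a \<Rightarrow> real) \<Rightarrow> 'a \<Rightarrow> ennreal" where
  "dyadic_max M T \<phi> x = (SUP I\<in>{I\<in>T. x \<in> I}.
      (\<integral>\<^sup>+ y. ennreal \<bar>\<phi> y\<bar> * indicator I y \<partial>M) / emeasure M I)"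

definition enn_powr :: "ennreal \<Rightarrow> real \<Rightarrow> ennreal" where
  "enn_powr a q = (if a = \<infinity> then \<infinity> else ennreal (enn2real a powr q))"

definition H_fun :: "real \<Rightarrow> real \<Rightarrow> real" where
  "H_fun q z = (1 - q) * z powr q + q * z powr (q - 1)"

definition omega :: "real \<Rightarrow> real \<Rightarrow> real" where
  "omega q z = (THE y. y \<ge> 1 \<and> H_fun q y = z) powr q"

end

theory Submission imports Defs begin

lemma tree_level_sub:
  assumes "\<And>I. I\<in>T \<Longrightarrow> C I \<subseteq> T" "X \<in> T" shows "tree_level C X k \<subseteq> T"
  using assms by (induction k) auto

lemma tree_level_countable:
  assumes "\<And>I. I\<in>T \<Longrightarrow> C I \<subseteq> T \<and> countable (C I)" "X \<in> T" shows "countable (tree_level C X k)"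
proof (induction k)
  case 0 then show ?case by simp
next
  case (Suc k)
  have "tree_level C X k \<subseteq> T" using tree_level_sub[of T C X k] assms by blast
  then show ?case using Suc assms by (auto intro!: countable_UN)
qed

lemma tree_level_disj:
  assumes "\<And>I. I\<in>T \<Longrightarrow> C I \<subseteq> T \<and> disjoint (C I) \<and> (\<forall>J\<in>C I. J \<subseteq> I)" "X \<in> T"
  shows "I \<in> tree_level C X k \<Longrightarrow> J \<in> tree_level C X k \<Longrightarrow> I = J \<or> I \<inter> J = {}"
proof (induction k arbitrary: I J)
  case 0 then show ?case by simp
next
  case (Suc k)
  have sub: "tree_level C X k \<subseteq> T" using tree_level_sub[of T C X k] assms by blast
  from Suc.prems obtain I' J' where I': "I' \<in> tree_level C X k" "I \<in> C I'"
    and J': "J' \<in> tree_level C X k" "J \<in> C J'" by auto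
  from Suc.IH[OF I'(1) J'(1)] show ?case
  proof
    assume "I' = J'"
    then show ?thesis using assms(1)[of I'] I' J' sub unfolding disjoint_def by blast
  next
    assume "I' \<inter> J' = {}"
    moreover have "I \<subseteq> I'" "J \<subseteq> J'" using assms(1) I' J' sub by blast+
    ultimately show ?thesis by blast
  qed
qed

lemma tree_level_nest:
  assumes "\<And>I. I\<in>T \<Longrightarrow> C I \<subseteq> T \<and> (\<forall>J\<in>C I. J \<subseteq> I)" "X \<in> T"
  shows "i \<le> j \<Longrightarrow> J \<in> tree_level C X j \<Longrightarrow> \<exists>K\<in>tree_level C X i. J \<subseteq> K"
proof (induction j arbitrary: J)
  case 0 then show ?case by auto
next
  case (Suc j)
  show ?case
  proof (cases "i = Suc j")
    case True then show ?thesis using Suc by blast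
  next
    case False
    then have "i \<le> j" using Suc by simp
    from Suc.prems obtain I' where I': "I' \<in> tree_level C X j" "J \<in> C I'" by auto
    have "I' \<in> T" using tree_level_sub[of T C X j] assms I' by blast
    then have "J \<subseteq> I'" using assms I' by blast
    then show ?thesis using Suc.IH[OF \<open>i \<le> j\<close> I'(1)] by blast
  qed
qed

lemma dyadic_max_alt:
  assumes "space M \<in> T" "x \<in> space M"
  shows "dyadic_max M T \<phi> x = (SUP I\<in>T. ((\<integral>\<^sup>+ y. ennreal \<bar>\<phi> y\<bar> * indicator I y \<partial>M) / emeasure M I) * indicator I x)"
  unfolding dyadic_max_def
proof (rule antisym)
  show "(SUP I\<in>{I \<in> T. x \<in> I}. (\<integral>\<^sup>+ y. ennreal \<bar>\<phi> y\<bar> * indicator I y \<partial>M) / emeasure M I)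
    \<le> (SUP I\<in>T. ((\<integral>\<^sup>+ y. ennreal \<bar>\<phi> y\<bar> * indicator I y \<partial>M) / emeasure M I) * indicator I x)"
    by (rule SUP_mono) (auto intro!: bexI)
next
  show "(SUP I\<in>T. ((\<integral>\<^sup>+ y. ennreal \<bar>\<phi> y\<bar> * indicator I y \<partial>M) / emeasure M I) * indicator I x)
    \<le> (SUP I\<in>{I \<in> T. x \<in> I}. (\<integral>\<^sup>+ y. ennreal \<bar>\<phi> y\<bar> * indicator I y \<partial>M) / emeasure M I)"
  proof (rule SUP_least)
    fix I assume "I \<in> T"
    show "((\<integral>\<^sup>+ y. ennreal \<bar>\<phi> y\<bar> * indicator I y \<partial>M) / emeasure M I) * indicator I x
      \<le> (SUP I\<in>{I \<in> T. x \<in> I}. (\<integral>\<^sup>+ y. ennreal \<bar>\<phi> y\<bar> * indicator I y \<partial>M) / emeasure M I)"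
    proof (cases "x \<in> I")
      case True then show ?thesis using \<open>I \<in> T\<close> by (auto intro!: SUP_upper)
    qed simp
  qed
qed

lemma dyadic_max_measurable:
  assumes "space M \<in> T" "countable T" "T \<subseteq> sets M" and [measurable]: "\<phi> \<in> borel_measurable M"
  shows "dyadic_max M T \<phi> \<in> borel_measurable M"
proof -
  have "(\<lambda>x. SUP I\<in>T. ((\<integral>\<^sup>+ y. ennreal \<bar>\<phi> y\<bar> * indicator I y \<partial>M) / emeasure M I) * indicator I x) \<in> borel_measurable M"
    using assms by (intro borel_measurable_SUP) auto
  then show ?thesis
    by (rule measurable_cong[THEN iffD1, rotated]) (simp add: dyadic_max_alt assms)
qed

lemma weak_type:
  fixes t :: real
  assumes T: "T = (\<Union>k. tree_level C (space M) k)" and spT: "space M \<in> T"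
   and Tsets: "\<And>I. I\<in>T \<Longrightarrow> I \<in> sets M \<and> measure M I > 0"
   and Cp: "\<And>I. I\<in>T \<Longrightarrow> C I \<subseteq> T \<and> countable (C I) \<and> disjoint (C I) \<and> (\<forall>J\<in>C I. J \<subseteq> I)"
   and fin: "finite_measure M" and phi[measurable]: "\<phi> \<in> borel_measurable M" and t: "t > 0"
  shows "ennreal t * emeasure M {x\<in>space M. ennreal t < dyadic_max M T \<phi> x}
     \<le> emeasure (density M (\<lambda>x. ennreal \<bar>\<phi> x\<bar>)) {x\<in>space M. ennreal t < dyadic_max M T \<phi> x}"
proof -
  define L where "L k = tree_level C (space M) k" for k
  define avg where "avg I = (\<integral>\<^sup>+ y. ennreal \<bar>\<phi> y\<bar> * indicator I y \<partial>M) / emeasure M I" for I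
  define G where "G k = {I\<in>L k. ennreal t < avg I}" for k
  define Sel where "Sel k = {I\<in>G k. \<forall>j<k. \<forall>K\<in>G j. I \<inter> K = {}}" for k
  define S where "S = (\<Union>k. Sel k)"
  define E where "E = {x\<in>space M. ennreal t < dyadic_max M T \<phi> x}"
  define N where "N = density M (\<lambda>x. ennreal \<bar>\<phi> x\<bar>)"
  have LT: "L k \<subseteq> T" for k unfolding L_def using tree_level_sub[of T C "space M" k] Cp spT by blast
  have disjL: "I \<in> L k \<Longrightarrow> J \<in> L k \<Longrightarrow> I = J \<or> I \<inter> J = {}" for I J k
    unfolding L_def using tree_level_disj[of T C "space M" I k J] Cp spT by blast
  have nest: "i \<le> j \<Longrightarrow> J \<in> L j \<Longrightarrow> \<exists>K\<in>L i. J \<subseteq> K" for i j J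
    unfolding L_def using tree_level_nest[of T C "space M" i j J] Cp spT by blast
  have cT: "countable T" unfolding T
    using tree_level_countable[of T C "space M"] Cp spT by (auto intro!: countable_UN)
  have ST: "S \<subseteq> T" unfolding S_def Sel_def G_def using LT by blast
  have cS: "countable S" using ST cT countable_subset by blast
  have Ssets: "I \<in> S \<Longrightarrow> I \<in> sets M" for I using ST Tsets by blast
  have avg_le: "x \<in> I \<Longrightarrow> I \<in> T \<Longrightarrow> avg I \<le> dyadic_max M T \<phi> x" for x I
    unfolding dyadic_max_def avg_def by (auto intro!: SUP_upper)
  have E_eq: "E = \<Union>S"
  proof
    show "\<Union>S \<subseteq> E"
    proof
      fix x assume "x \<in> \<Union>S"
      then obtain I k where I: "I \<in> Sel k" "x \<in> I" unfolding S_def by blast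
      then have "I \<in> T" "ennreal t < avg I" using LT unfolding Sel_def G_def by blast+
      moreover then have "x \<in> space M" using Tsets[of I] I sets.sets_into_space by blast
      ultimately show "x \<in> E" unfolding E_def using avg_le[OF I(2)] by (auto intro: less_le_trans)
    qed
  next
    show "E \<subseteq> \<Union>S"
    proof
      fix x assume "x \<in> E"
      then have "ennreal t < (SUP I\<in>{I\<in>T. x \<in> I}. avg I)" unfolding E_def dyadic_max_def avg_def by simp
      then obtain I where I: "I \<in> T" "x \<in> I" "ennreal t < avg I" by (auto simp: less_SUP_iff)
      then obtain k where "I \<in> L k" unfolding T L_def by blast
      then have ex: "\<exists>k. \<exists>I\<in>G k. x \<in> I" using I unfolding G_def by blast
      define k0 where "k0 = (LEAST k. \<exists>I\<in>G k. x \<in> I)"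
      have "\<exists>I\<in>G k0. x \<in> I" unfolding k0_def using ex by (rule LeastI_ex)
      then obtain I0 where I0: "I0 \<in> G k0" "x \<in> I0" by blast
      have "I0 \<in> Sel k0"
        unfolding Sel_def
      proof (safe intro!: I0(1))
        fix j K z assume j: "j < k0" and K: "K \<in> G j" and z: "z \<in> I0" "z \<in> K"
        obtain K' where K': "K' \<in> L j" "I0 \<subseteq> K'" using nest[of j k0 I0] j I0 unfolding G_def by auto
        have "K \<in> L j" using K unfolding G_def by blast
        then have "K' = K" using disjL[OF K'(1)] K' z by blast
        then have "x \<in> K" using K' I0 by blast
        then have "\<exists>I\<in>G j. x \<in> I" using K by blast
        then have "k0 \<le> j" unfolding k0_def by (rule Least_le)
        then show "z \<in> {}" using j by simp
      qed
      then show "x \<in> \<Union>S" unfolding S_def using I0 by blast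
    qed
  qed
  have disjS: "disjoint_family_on (\<lambda>I. I) S"
    unfolding disjoint_family_on_def
  proof (intro ballI impI)
    fix I J assume "I \<in> S" "J \<in> S" "I \<noteq> J"
    then obtain k k' where I: "I \<in> Sel k" and J: "J \<in> Sel k'" unfolding S_def by blast
    show "I \<inter> J = {}"
    proof (cases k k' rule: linorder_cases)
      case less then show ?thesis using J I unfolding Sel_def by blast
    next
      case equal then show ?thesis using disjL[of I k J] I J \<open>I \<noteq> J\<close> unfolding Sel_def G_def by blast
    next
      case greater then show ?thesis using J I unfolding Sel_def by blast
    qed
  qed
  have key: "ennreal t * emeasure M I \<le> emeasure N I" if "I \<in> S" for I
  proof -
    have IT: "I \<in> T" using that ST by blast
    have lt: "ennreal t < avg I" using that unfolding S_def Sel_def G_def by blast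
    have Is: "I \<in> sets M" and pos: "measure M I > 0" using Tsets[OF IT] by auto
    have em: "emeasure M I = ennreal (measure M I)"
      using fin Is by (simp add: finite_measure.emeasure_eq_measure)
    have NI: "emeasure N I = (\<integral>\<^sup>+ y. ennreal \<bar>\<phi> y\<bar> * indicator I y \<partial>M)"
      unfolding N_def using Is by (simp add: emeasure_density)
    show ?thesis
    proof (cases "emeasure N I = \<infinity>")
      case True then show ?thesis by simp
    next
      case False
      then obtain a where a: "emeasure N I = ennreal a" "a \<ge> 0" by (cases "emeasure N I") auto
      have "avg I = ennreal (a / measure M I)"
        unfolding avg_def using NI a em pos by (metis divide_ennreal)
      then have "t < a / measure M I" using lt a t by (simp add: ennreal_less_iff)
      then have "t * measure M I \<le> a" using pos by (simp add: field_simps)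
      then show ?thesis using a em t by (simp add: ennreal_mult[symmetric])
    qed
  qed
  have "ennreal t * emeasure M E = ennreal t * (\<integral>\<^sup>+I. emeasure M I \<partial>count_space S)"
    unfolding E_eq using emeasure_UN_countable[of S "\<lambda>I. I" M] Ssets cS disjS by simp
  also have "\<dots> = (\<integral>\<^sup>+I. ennreal t * emeasure M I \<partial>count_space S)"
    by (simp add: nn_integral_cmult)
  also have "\<dots> \<le> (\<integral>\<^sup>+I. emeasure N I \<partial>count_space S)"
    by (rule nn_integral_mono) (use key in simp)
  also have "\<dots> = emeasure N E"
    unfolding E_eq using emeasure_UN_countable[of S "\<lambda>I. I" N] Ssets cS disjS N_def by simp
  finally show ?thesis unfolding E_def N_def .
qed

lemma ftc_gen:
  fixes F f :: "real \<Rightarrow> real"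
  assumes fm: "f \<in> borel_measurable borel"
    and D: "\<And>t. t \<in> {a..b} \<Longrightarrow> DERIV F t :> f t" and nn: "\<And>t. t \<in> {a..b} \<Longrightarrow> 0 \<le> f t"
    and ab: "a \<le> b"
  shows "(\<integral>\<^sup>+t. ennreal (f t) * indicator {a<..} t * (if t < b then 1 else 0) \<partial>lborel) = ennreal (F b - F a)"
proof -
  have "(\<integral>\<^sup>+t. ennreal (f t) * indicator {a<..} t * (if t < b then 1 else 0) \<partial>lborel)
      = (\<integral>\<^sup>+t. ennreal (f t) * indicator {a..b} t \<partial>lborel)"
  proof (rule nn_integral_cong_AE)
    have "AE t in lborel. t \<noteq> a" "AE t in lborel. t \<noteq> b" by (rule AE_lborel_singleton)+
    then show "AE t in lborel. ennreal (f t) * indicator {a<..} t * (if t < b then 1 else 0) = ennreal (f t) * indicator {a..b} t"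
      by eventually_elim (auto split: split_indicator)
  qed
  also have "\<dots> = ennreal (F b - F a)"
    by (rule nn_integral_FTC_Icc[OF fm D nn ab])
  finally show ?thesis .
qed

lemma L1:
  fixes q a b :: real
  assumes q: "0 < q" and a: "0 < a" and ab: "a \<le> b"
  shows "(\<integral>\<^sup>+t. ennreal (q * t powr (q-1)) * indicator {a<..} t * (if t < b then 1 else 0) \<partial>lborel) = ennreal (b powr q - a powr q)"
proof (rule ftc_gen[OF _ _ _ ab])
  fix t assume t: "t \<in> {a..b}"
  then have "t > 0" using a by auto
  show "DERIV (\<lambda>t. t powr q) t :> q * t powr (q-1)"
    by (rule has_real_derivative_powr[OF \<open>t>0\<close>])
  show "0 \<le> q * t powr (q-1)" using q by simp
qed simp

lemma L2:
  fixes q a b :: real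
  assumes q: "0 < q" "q < 1" and a: "0 < a" and ab: "a \<le> b"
  shows "(\<integral>\<^sup>+t. ennreal (q * t powr (q-2)) * indicator {a<..} t * (if t < b then 1 else 0) \<partial>lborel)
     = ennreal (q / (1-q) * (a powr (q-1) - b powr (q-1)))"
proof -
  have "(\<integral>\<^sup>+t. ennreal (q * t powr (q-2)) * indicator {a<..} t * (if t < b then 1 else 0) \<partial>lborel)
     = ennreal (q/(q-1) * b powr (q-1) - q/(q-1) * a powr (q-1))"
  proof (rule ftc_gen[OF _ _ _ ab])
    fix t assume t: "t \<in> {a..b}"
    then have "t > 0" using a by auto
    show "DERIV (\<lambda>t. q/(q-1) * t powr (q-1)) t :> q * t powr (q-2)"
    proof -
      have "DERIV (\<lambda>t. q/(q-1) * t powr (q-1)) t :> q/(q-1) * ((q-1) * t powr (q-1-1))"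
        by (rule DERIV_cmult, rule has_real_derivative_powr[OF \<open>t>0\<close>])
      moreover have "q/(q-1) * ((q-1) * t powr (q-1-1)) = q * t powr (q-2)" using q by simp
      ultimately show ?thesis by simp
    qed
    show "0 \<le> q * t powr (q-2)" using q by simp
  qed simp
  also have "q/(q-1) * b powr (q-1) - q/(q-1) * a powr (q-1) = q / (1-q) * (a powr (q-1) - b powr (q-1))"
  proof -
    have e: "q/(q-1) = - (q/(1-q))" by (metis minus_diff_eq divide_minus_right)
    show ?thesis unfolding e by (simp add: algebra_simps)
  qed
  finally show ?thesis .
qed

lemma H_deriv:
  assumes "0 < z"
  shows "DERIV (H_fun q) z :> (1-q) * (q * z powr (q-1)) + q * ((q-1) * z powr (q-1-1))"
  unfolding H_fun_def[abs_def]
  by (intro DERIV_add DERIV_cmult has_real_derivative_powr assms)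

lemma H_cont: "continuous_on {a..b} (H_fun q)" if "0 < a"
  using that by (intro continuous_at_imp_continuous_on ballI DERIV_isCont) (auto intro: H_deriv)

lemma H_strict:
  assumes q: "0 < q" "q < 1" and "1 \<le> x" "x < y"
  shows "H_fun q x < H_fun q y"
proof (rule DERIV_pos_imp_increasing_open[OF \<open>x < y\<close>])
  fix z assume z: "x < z" "z < y"
  then have z0: "z > 1" using assms by simp
  have "(1-q) * (q * z powr (q-1)) + q * ((q-1) * z powr (q-1-1)) = q * (1-q) * (z powr (q-1) - z powr (q-2))"
    by (simp add: algebra_simps)
  moreover have "z powr (q-2) < z powr (q-1)" using z0 by (intro powr_less_mono) auto
  ultimately have "(1-q) * (q * z powr (q-1)) + q * ((q-1) * z powr (q-1-1)) > 0" using q by simp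
  then show "\<exists>y. DERIV (H_fun q) z :> y \<and> 0 < y" using H_deriv[of z q] z0 by auto
next
  show "continuous_on {x..y} (H_fun q)" using assms by (intro H_cont) auto
qed

lemma omega_bound:
  assumes q: "0 < q" "q < 1" and c: "1 \<le> c" and z: "0 < z" and Hz: "H_fun q z \<le> c"
  shows "z powr q \<le> omega q c"
proof -
  define b where "b = (c/(1-q)) powr (1/q)"
  have cq: "c/(1-q) \<ge> 1" using q c by (simp add: field_simps)
  have b1: "b \<ge> 1" unfolding b_def using cq q by (simp add: ge_one_powr_ge_zero)
  have "b powr q = c/(1-q)" unfolding b_def using cq q by (simp add: powr_powr)
  then have "(1-q) * b powr q = c" using q by simp
  moreover have "q * b powr (q-1) \<ge> 0" using q by simp
  ultimately have "H_fun q b \<ge> c" unfolding H_fun_def by linarith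
  moreover have "H_fun q 1 \<le> c" using c by (simp add: H_fun_def)
  ultimately obtain y0 where y0: "1 \<le> y0" "y0 \<le> b" "H_fun q y0 = c"
    using IVT'[of "H_fun q" 1 c b] b1 H_cont[of 1 b q] by auto
  have uniq: "y = y0" if "y \<ge> 1 \<and> H_fun q y = c" for y
    using H_strict[OF q, of y y0] H_strict[OF q, of y0 y] that y0 by (cases y y0 rule: linorder_cases) auto
  have th: "(THE y. y \<ge> 1 \<and> H_fun q y = c) = y0"
    by (rule the_equality) (use y0 in simp, use uniq in blast)
  have om: "omega q c = y0 powr q" unfolding omega_def th ..
  have "z \<le> y0"
  proof (rule ccontr)
    assume "\<not> z \<le> y0"
    then have "H_fun q y0 < H_fun q z" using H_strict[OF q y0(1)] by simp
    then show False using Hz y0 by simp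
  qed
  then show ?thesis unfolding om using z q by (intro powr_mono2) auto
qed

lemma young_pt:
  fixes q z G p :: real
  assumes q: "0 < q" "q < 1" and z: "0 < z" and G: "0 < G" and p: "0 \<le> p"
  shows "p powr q \<le> q * (z powr (1-q) * (p * G powr (q-1))) + (1-q) * (z powr (-q) * G powr q)"
proof (cases "p = 0")
  case True then show ?thesis using q by simp
next
  case False
  then have p0: "p > 0" using p by simp
  define a where "a = z powr (1-q) * (p * G powr (q-1))"
  define b where "b = z powr (-q) * G powr q"
  have a0: "a > 0" unfolding a_def using z G p0 by simp
  have b0: "b > 0" unfolding b_def using z G by simp
  have "a powr q = z powr ((1-q)*q) * (p powr q * G powr ((q-1)*q))"
    unfolding a_def using z G p0 by (simp add: powr_mult powr_powr)
  moreover have "b powr (1-q) = z powr (-q*(1-q)) * G powr (q*(1-q))"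
    unfolding b_def using z G by (simp add: powr_mult powr_powr)
  ultimately have "a powr q * b powr (1-q) = (z powr ((1-q)*q) * z powr (-q*(1-q))) * p powr q * (G powr ((q-1)*q) * G powr (q*(1-q)))"
    by (simp add: algebra_simps)
  also have "\<dots> = p powr q"
  proof -
    have "z powr ((1-q)*q) * z powr (-q*(1-q)) = z powr ((1-q)*q + -q*(1-q))" by (rule powr_add[symmetric])
    also have "\<dots> = 1" using z by (simp add: algebra_simps)
    finally have 1: "z powr ((1-q)*q) * z powr (-q*(1-q)) = 1" .
    have "G powr ((q-1)*q) * G powr (q*(1-q)) = G powr ((q-1)*q + q*(1-q))" by (rule powr_add[symmetric])
    also have "\<dots> = 1" using G by (simp add: algebra_simps)
    finally have 2: "G powr ((q-1)*q) * G powr (q*(1-q)) = 1" .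
    show ?thesis unfolding 1 2 by simp
  qed
  finally have eq: "a powr q * b powr (1-q) = p powr q" .
  have "a powr q * b powr (1-q) \<le> q * a + (1-q) * b"
    using Youngs_inequality_0[of q "1-q" a b] q a0 b0 by simp
  then show ?thesis using eq unfolding a_def b_def by simp
qed

theorem lemma3p1:
  fixes M :: "'a measure" and T :: "'a set set" and q f h :: real and \<phi> :: "'a \<Rightarrow> real"
  assumes "prob_space M" and "non_atomic M" and "is_tree M T"
    and "0 < q" and "q < 1"
    and "0 < h" and "h \<le> f powr q"
    and "integrable M \<phi>" and "AE x in M. \<phi> x \<ge> 0"
    and "integral\<^sup>L M \<phi> = f"
    and "integral\<^sup>L M (\<lambda>x. \<phi> x powr q) = h"
  shows "(\<integral>\<^sup>+ x. enn_powr (dyadic_max M T \<phi> x) q \<partial>M) \<le> ennreal (h * omega q (f powr q / h))"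
proof -
  interpret prob_space M by (rule assms(1))
  have q: "0 < q" "q < 1" using assms by auto
  note intphi = assms(8) and phinn = assms(9)
  have phim[measurable]: "\<phi> \<in> borel_measurable M" using intphi by auto
  obtain C where spT: "space M \<in> T" and Tsets': "\<forall>I\<in>T. I \<in> sets M \<and> measure M I > 0"
    and Cp': "\<forall>I\<in>T. C I \<subseteq> T \<and> countable (C I) \<and> (\<exists>J K. J \<in> C I \<and> K \<in> C I \<and> J \<noteq> K) \<and>
             disjoint (C I) \<and> (\<forall>J\<in>C I. J \<subseteq> I) \<and> \<Union> (C I) = I"
    and Teq: "T = (\<Union>m. tree_level C (space M) m)"
    using assms(3) unfolding is_tree_def by blast
  have Tsets: "I \<in> sets M \<and> measure M I > 0" if "I\<in>T" for I using bspec[OF Tsets' that] .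
  have Cp: "C I \<subseteq> T \<and> countable (C I) \<and> disjoint (C I) \<and> (\<forall>J\<in>C I. J \<subseteq> I)" if "I\<in>T" for I
    using bspec[OF Cp' that] by blast
  have cT: "countable T" unfolding Teq
    using tree_level_countable[of T C "space M"] Cp spT by (auto intro!: countable_UN)
  define m where "m = dyadic_max M T \<phi>"
  have mm[measurable]: "m \<in> borel_measurable M" unfolding m_def
    using dyadic_max_measurable[OF spT cT _ phim] Tsets by blast
  define g where "g x = enn2real (m x)" for x
  have gm[measurable]: "g \<in> borel_measurable M" unfolding g_def by measurable
  have f0: "f \<ge> 0" using assms(10) integral_nonneg_AE[OF phinn] by simp
  have fpos: "f > 0"
  proof (rule ccontr)
    assume "\<not> f > 0" then have "f = 0" using f0 by simp
    then show False using assms(6,7) by simp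
  qed
  have absint: "(\<integral>\<^sup>+ y. ennreal \<bar>\<phi> y\<bar> \<partial>M) = ennreal f"
  proof -
    have "(\<integral>\<^sup>+ y. ennreal \<bar>\<phi> y\<bar> \<partial>M) = ennreal (integral\<^sup>L M (\<lambda>y. \<bar>\<phi> y\<bar>))"
      using intphi by (intro nn_integral_eq_integral) auto
    also have "integral\<^sup>L M (\<lambda>y. \<bar>\<phi> y\<bar>) = integral\<^sup>L M \<phi>"
      using phinn by (intro integral_cong_AE) auto
    finally show ?thesis using assms(10) by simp
  qed
  have m_ge: "ennreal f \<le> m x" if "x \<in> space M" for x
  proof -
    have "(\<integral>\<^sup>+ y. ennreal \<bar>\<phi> y\<bar> * indicator (space M) y \<partial>M) / emeasure M (space M) = ennreal f"
    proof -
      have "(\<integral>\<^sup>+ y. ennreal \<bar>\<phi> y\<bar> * indicator (space M) y \<partial>M) = (\<integral>\<^sup>+ y. ennreal \<bar>\<phi> y\<bar> \<partial>M)"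
        by (rule nn_integral_cong) simp
      then show ?thesis using absint by (simp add: emeasure_space_1 divide_ennreal_def)
    qed
    moreover have "(\<integral>\<^sup>+ y. ennreal \<bar>\<phi> y\<bar> * indicator (space M) y \<partial>M) / emeasure M (space M)
       \<le> (SUP I\<in>{I\<in>T. x \<in> I}. (\<integral>\<^sup>+ y. ennreal \<bar>\<phi> y\<bar> * indicator I y \<partial>M) / emeasure M I)"
      by (rule SUP_upper) (use that spT in simp)
    ultimately show ?thesis unfolding m_def dyadic_max_def by simp
  qed
  define N where "N = density M (\<lambda>x. ennreal \<bar>\<phi> x\<bar>)"
  have wt: "ennreal t * emeasure M {x\<in>space M. ennreal t < m x} \<le> emeasure N {x\<in>space M. ennreal t < m x}" if "t > 0" for t
    unfolding m_def N_def by (rule weak_type[OF Teq spT Tsets Cp prob_space.finite_measure[OF assms(1)] phim that])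
  have Nle: "emeasure N A \<le> ennreal f" for A
  proof -
    have "emeasure N A \<le> emeasure N (space N)" by (rule emeasure_space)
    also have "\<dots> = ennreal f" unfolding N_def using absint by (simp add: emeasure_density)
    finally show ?thesis .
  qed
  have mfin: "AE x in M. m x \<noteq> \<infinity>"
  proof -
    define Einf where "Einf = {x\<in>space M. m x = \<infinity>}"
    have Es: "Einf \<in> sets M" unfolding Einf_def by measurable
    have bound: "real n * measure M Einf \<le> f" if "n > 0" for n :: nat
    proof -
      have "Einf \<subseteq> {x\<in>space M. ennreal (real n) < m x}" unfolding Einf_def by auto
      then have "emeasure M Einf \<le> emeasure M {x\<in>space M. ennreal (real n) < m x}"
        by (intro emeasure_mono) measurable
      then have "ennreal (real n) * emeasure M Einf \<le> ennreal (real n) * emeasure M {x\<in>space M. ennreal (real n) < m x}"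
        by (rule mult_left_mono) simp
      also have "\<dots> \<le> ennreal f" using wt[of "real n"] Nle[of "{x\<in>space M. ennreal (real n) < m x}"] that
        by (meson order_trans of_nat_0_less_iff)
      finally have "ennreal (real n * measure M Einf) \<le> ennreal f"
        by (simp add: emeasure_eq_measure ennreal_mult)
      then show ?thesis using f0 by simp
    qed
    have "measure M Einf = 0"
    proof (rule ccontr)
      assume "measure M Einf \<noteq> 0"
      then have r: "measure M Einf > 0" using measure_nonneg[of M Einf] by linarith
      obtain n :: nat where n: "f / measure M Einf < real n" using reals_Archimedean2 by blast
      then have "n > 0" using f0 r by (metis divide_nonneg_pos not_gr_zero not_less of_nat_0)
      then have "real n * measure M Einf \<le> f" by (rule bound)
      moreover have "f < real n * measure M Einf" using n r by (simp add: field_simps)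
      ultimately show False by simp
    qed
    then have "Einf \<in> null_sets M" using Es by (simp add: emeasure_eq_measure null_setsI)
    then show ?thesis by (rule AE_I') (auto simp: Einf_def)
  qed
  have gAE: "AE x in M. m x = ennreal (g x) \<and> f \<le> g x"
    using mfin AE_space
  proof eventually_elim
    case (elim x)
    then have e: "m x = ennreal (g x)" unfolding g_def by (simp add: less_top)
    moreover have "ennreal f \<le> ennreal (g x)" using m_ge[OF elim(2)] e by simp
    then have "f \<le> g x" using enn2real_nonneg[of "m x"] unfolding g_def by simp
    ultimately show ?case by simp
  qed
  have gpos: "AE x in M. 0 < g x" using gAE fpos by auto
  interpret P: pair_sigma_finite M lborel
    unfolding pair_sigma_finite_def using sigma_finite_lborel prob_space_imp_sigma_finite[OF assms(1)] by auto
  define K where "K x t = ennreal (q * t powr (q-1)) * indicator {f<..} t * (if t < g x then 1 else (0::ennreal))" for x t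
  define K2 where "K2 x t = ennreal (q * t powr (q-2)) * indicator {f<..} t * (ennreal \<bar>\<phi> x\<bar> * (if t < g x then 1 else (0::ennreal)))" for x t
  have Km[measurable]: "case_prod K \<in> borel_measurable (M \<Otimes>\<^sub>M lborel)" unfolding K_def by measurable
  have K2m[measurable]: "case_prod K2 \<in> borel_measurable (M \<Otimes>\<^sub>M lborel)" unfolding K2_def by measurable
  define D where "D x = q/(1-q) * (f powr (q-1) - g x powr (q-1))" for x
  define \<psi> where "\<psi> x = \<bar>\<phi> x\<bar> * g x powr (q-1)" for x
  define J where "J = integral\<^sup>L M \<psi>"
  have absint_r: "integral\<^sup>L M (\<lambda>y. \<bar>\<phi> y\<bar>) = f"
    using phinn assms(10) by (subst integral_cong_AE[where g=\<phi>]) auto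
  have int\<psi>: "integrable M \<psi>"
  proof (rule Bochner_Integration.integrable_bound)
    show "integrable M (\<lambda>x. \<bar>\<phi> x\<bar> * f powr (q-1))" using intphi by auto
    show "\<psi> \<in> borel_measurable M" unfolding \<psi>_def by measurable
    show "AE x in M. norm (\<psi> x) \<le> norm (\<bar>\<phi> x\<bar> * f powr (q-1))"
      using gAE
    proof eventually_elim
      case (elim x)
      have "g x powr (q-1) \<le> f powr (q-1)" using elim fpos q by (intro powr_mono2') auto
      then show ?case unfolding \<psi>_def by (simp add: abs_mult mult_left_mono)
    qed
  qed
  have intD: "integrable M (\<lambda>x. \<bar>\<phi> x\<bar> * D x)"
  proof -
    have "(\<lambda>x. \<bar>\<phi> x\<bar> * D x) = (\<lambda>x. q/(1-q) * (f powr (q-1) * \<bar>\<phi> x\<bar> - \<psi> x))"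
      unfolding D_def \<psi>_def by (auto simp: algebra_simps)
    then show ?thesis using int\<psi> intphi by auto
  qed
  define X where "X = integral\<^sup>L M (\<lambda>x. \<bar>\<phi> x\<bar> * D x)"
  have Xeq: "X = q/(1-q) * (f powr q - J)"
  proof -
    have "(\<lambda>x. \<bar>\<phi> x\<bar> * D x) = (\<lambda>x. q/(1-q) * (f powr (q-1) * \<bar>\<phi> x\<bar> - \<psi> x))"
      unfolding D_def \<psi>_def by (auto simp: algebra_simps)
    then have "X = q/(1-q) * (f powr (q-1) * f - J)"
      unfolding X_def J_def using int\<psi> intphi absint_r by (simp add: integral_diff)
    moreover have "f powr (q-1) * f = f powr q" using fpos by (simp add: powr_diff)
    ultimately show ?thesis by simp
  qed
  have Dnn: "AE x in M. 0 \<le> D x"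
    using gAE
  proof eventually_elim
    case (elim x)
    have "g x powr (q-1) \<le> f powr (q-1)" using elim fpos q by (intro powr_mono2') auto
    then show ?case unfolding D_def using q by simp
  qed
  have X0: "X \<ge> 0" unfolding X_def using Dnn by (intro integral_nonneg_AE) auto
  have A: "(\<integral>\<^sup>+ x. enn_powr (m x) q \<partial>M) = (\<integral>\<^sup>+ x. ennreal (g x powr q) \<partial>M)"
    using mfin by (intro nn_integral_cong_AE) (auto simp: enn_powr_def g_def)
  also have B: "\<dots> = (\<integral>\<^sup>+ x. ennreal (f powr q) + (\<integral>\<^sup>+ t. K x t \<partial>lborel) \<partial>M)"
  proof (rule nn_integral_cong_AE)
    show "AE x in M. ennreal (g x powr q) = ennreal (f powr q) + (\<integral>\<^sup>+ t. K x t \<partial>lborel)"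
      using gAE
    proof eventually_elim
      case (elim x)
      have "(\<integral>\<^sup>+ t. K x t \<partial>lborel) = ennreal (g x powr q - f powr q)"
        unfolding K_def using L1[OF q(1) fpos] elim by simp
      moreover have "f powr q \<le> g x powr q" using elim fpos q by (intro powr_mono2) auto
      ultimately show ?case by (simp add: ennreal_plus[symmetric] del: ennreal_plus)
    qed
  qed
  also have C: "\<dots> = ennreal (f powr q) + (\<integral>\<^sup>+ x. (\<integral>\<^sup>+ t. K x t \<partial>lborel) \<partial>M)"
    by (subst nn_integral_add) (auto intro!: lborel.borel_measurable_nn_integral simp: emeasure_space_1)
  also have D': "(\<integral>\<^sup>+ x. (\<integral>\<^sup>+ t. K x t \<partial>lborel) \<partial>M) = (\<integral>\<^sup>+ t. (\<integral>\<^sup>+ x. K x t \<partial>M) \<partial>lborel)"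
    using P.Fubini'[OF Km] by simp
  also have E: "(\<integral>\<^sup>+ t. (\<integral>\<^sup>+ x. K x t \<partial>M) \<partial>lborel) \<le> (\<integral>\<^sup>+ t. (\<integral>\<^sup>+ x. K2 x t \<partial>M) \<partial>lborel)"
  proof (rule nn_integral_mono)
    fix t :: real
    show "(\<integral>\<^sup>+ x. K x t \<partial>M) \<le> (\<integral>\<^sup>+ x. K2 x t \<partial>M)"
    proof (cases "f < t")
      case False then show ?thesis unfolding K_def by simp
    next
      case True
      then have t0: "t > 0" using fpos by simp
      define Q where "Q = (\<integral>\<^sup>+ x. (if t < g x then 1 else (0::ennreal)) \<partial>M)"
      have K1: "(\<integral>\<^sup>+ x. K x t \<partial>M) = ennreal (q * t powr (q-1)) * Q"
        unfolding K_def Q_def using True by (simp add: nn_integral_cmult)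
      have K21: "(\<integral>\<^sup>+ x. K2 x t \<partial>M) = ennreal (q * t powr (q-2)) * (\<integral>\<^sup>+ x. ennreal \<bar>\<phi> x\<bar> * (if t < g x then 1 else (0::ennreal)) \<partial>M)"
        unfolding K2_def using True by (simp add: nn_integral_cmult)
      have ct: "ennreal (q * t powr (q-1)) = ennreal (q * t powr (q-2)) * ennreal t"
      proof -
        have "t powr (q-2) * t powr 1 = t powr (q-2+1)" by (rule powr_add[symmetric])
        then have "t powr (q-1) = t powr (q-2) * t powr 1" by (simp add: algebra_simps)
        then show ?thesis using t0 q by (simp add: ennreal_mult[symmetric] mult.assoc)
      qed
      have "Q = (\<integral>\<^sup>+ x. indicator {x\<in>space M. t < g x} x \<partial>M)"
        unfolding Q_def by (intro nn_integral_cong) (auto split: split_indicator)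
      also have "\<dots> = emeasure M {x\<in>space M. t < g x}" by (intro nn_integral_indicator) measurable
      also have "\<dots> \<le> emeasure M {x\<in>space M. ennreal t < m x}"
      proof (intro emeasure_mono)
        show "{x \<in> space M. t < g x} \<subseteq> {x \<in> space M. ennreal t < m x}"
        proof safe
          fix x assume x: "x \<in> space M" "t < g x"
          then have "m x \<noteq> \<infinity>" using t0 unfolding g_def by auto
          then have "m x = ennreal (g x)" unfolding g_def by (simp add: less_top)
          then show "ennreal t < m x" using x t0 by (simp add: ennreal_less_iff)
        qed
      qed measurable
      finally have Qle: "ennreal t * Q \<le> emeasure N {x\<in>space M. ennreal t < m x}"
        using wt[OF t0] by (meson mult_left_mono order_trans zero_le)
      have "emeasure N {x\<in>space M. ennreal t < m x} = (\<integral>\<^sup>+ x. ennreal \<bar>\<phi> x\<bar> * indicator {x\<in>space M. ennreal t < m x} x \<partial>M)"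
        unfolding N_def by (rule emeasure_density) measurable
      also have "\<dots> = (\<integral>\<^sup>+ x. ennreal \<bar>\<phi> x\<bar> * (if t < g x then 1 else (0::ennreal)) \<partial>M)"
      proof (rule nn_integral_cong_AE)
        show "AE x in M. ennreal \<bar>\<phi> x\<bar> * indicator {x\<in>space M. ennreal t < m x} x = ennreal \<bar>\<phi> x\<bar> * (if t < g x then 1 else (0::ennreal))"
          using gAE AE_space
        proof eventually_elim
          case (elim x)
          then show ?case using t0 by (auto simp: ennreal_less_iff split: split_indicator)
        qed
      qed
      finally have "ennreal t * Q \<le> (\<integral>\<^sup>+ x. ennreal \<bar>\<phi> x\<bar> * (if t < g x then 1 else (0::ennreal)) \<partial>M)"
        using Qle by simp
      then show ?thesis unfolding K1 K21 ct mult.assoc by (rule mult_left_mono) simp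
    qed
  qed
  also have F: "(\<integral>\<^sup>+ t. (\<integral>\<^sup>+ x. K2 x t \<partial>M) \<partial>lborel) = (\<integral>\<^sup>+ x. (\<integral>\<^sup>+ t. K2 x t \<partial>lborel) \<partial>M)"
    using P.Fubini'[OF K2m] by simp
  also have G: "\<dots> = (\<integral>\<^sup>+ x. ennreal (\<bar>\<phi> x\<bar> * D x) \<partial>M)"
  proof (rule nn_integral_cong_AE)
    show "AE x in M. (\<integral>\<^sup>+ t. K2 x t \<partial>lborel) = ennreal (\<bar>\<phi> x\<bar> * D x)"
      using gAE Dnn
    proof eventually_elim
      case (elim x)
      have "(\<integral>\<^sup>+ t. K2 x t \<partial>lborel) = ennreal \<bar>\<phi> x\<bar> * (\<integral>\<^sup>+ t. ennreal (q * t powr (q-2)) * indicator {f<..} t * (if t < g x then 1 else 0) \<partial>lborel)"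
        unfolding K2_def by (subst nn_integral_cmult[symmetric]) (measurable, simp add: ac_simps)
      also have "\<dots> = ennreal \<bar>\<phi> x\<bar> * ennreal (D x)"
        unfolding D_def using L2[OF q fpos] elim by simp
      finally show ?case using elim by (simp add: ennreal_mult)
    qed
  qed
  also have H: "\<dots> = ennreal X"
    unfolding X_def using intD Dnn by (intro nn_integral_eq_integral) auto
  finally have main: "(\<integral>\<^sup>+ x. enn_powr (m x) q \<partial>M) \<le> ennreal (f powr q + X)"
    using X0 by (simp add: ennreal_plus)
  have gqm[measurable]: "(\<lambda>x. g x powr q) \<in> borel_measurable M" by measurable
  have intg: "integrable M (\<lambda>x. g x powr q)"
  proof (rule integrableI_bounded)
    have "(\<integral>\<^sup>+ x. ennreal (norm (g x powr q)) \<partial>M) = (\<integral>\<^sup>+ x. ennreal (g x powr q) \<partial>M)" by simp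
    also have "\<dots> < \<infinity>" using main A by (simp add: less_top[symmetric]) (metis ennreal_less_top top.not_eq_extremum neq_top_trans)
    finally show "(\<integral>\<^sup>+ x. ennreal (norm (g x powr q)) \<partial>M) < \<infinity>" .
  qed simp
  define IR where "IR = integral\<^sup>L M (\<lambda>x. g x powr q)"
  have IReq: "(\<integral>\<^sup>+ x. enn_powr (m x) q \<partial>M) = ennreal IR"
    unfolding A IR_def using intg by (intro nn_integral_eq_integral) auto
  have IRle: "IR \<le> f powr q + X"
  proof -
    have "ennreal IR \<le> ennreal (f powr q + X)" using main unfolding IReq .
    moreover have "0 \<le> f powr q + X" using X0 by simp
    ultimately show ?thesis using ennreal_le_iff by blast
  qed
  have IRge: "f powr q \<le> IR"
  proof -
    have "integral\<^sup>L M (\<lambda>x. f powr q) \<le> IR" unfolding IR_def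
    proof (rule integral_mono_AE)
      show "AE x in M. f powr q \<le> g x powr q" using gAE
        by eventually_elim (use fpos q in \<open>auto intro!: powr_mono2\<close>)
    qed (use intg in auto)
    then show ?thesis by (simp add: prob_space)
  qed
  have fq: "f powr q > 0" using fpos by simp
  define R where "R = IR / h"
  have R0: "R > 0" unfolding R_def
  proof (rule divide_pos_pos)
    show "0 < IR" using IRge fq by linarith
  qed (rule assms(6))
  define z where "z = R powr (1/q)"
  have z0: "z > 0" unfolding z_def using R0 by simp
  have zq: "z powr q = R" unfolding z_def using R0 q by (simp add: powr_powr)
  have intphiq: "integrable M (\<lambda>x. \<phi> x powr q)"
    using assms(6,11) not_integrable_integral_eq by fastforce
  have intaq: "integrable M (\<lambda>x. \<bar>\<phi> x\<bar> powr q)"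
    using intphiq by (rule integrable_cong_AE_imp) (measurable, use phinn in auto)
  have hq: "h = integral\<^sup>L M (\<lambda>x. \<bar>\<phi> x\<bar> powr q)"
    unfolding assms(11)[symmetric] using phinn by (intro integral_cong_AE) auto
  have young: "h \<le> q * z powr (1-q) * J + (1-q) * z powr (-q) * IR"
  proof -
    have "h \<le> integral\<^sup>L M (\<lambda>x. q * (z powr (1-q) * \<psi> x) + (1-q) * (z powr (-q) * g x powr q))"
      unfolding hq
    proof (rule integral_mono_AE)
      show "AE x in M. \<bar>\<phi> x\<bar> powr q \<le> q * (z powr (1-q) * \<psi> x) + (1-q) * (z powr (-q) * g x powr q)"
        using gpos by eventually_elim (use q z0 in \<open>auto simp: \<psi>_def intro!: young_pt\<close>)
    qed (use intaq int\<psi> intg in auto)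
    also have "\<dots> = q * z powr (1-q) * J + (1-q) * z powr (-q) * IR"
      unfolding J_def IR_def using int\<psi> intg by (simp add: integral_add)
    finally show ?thesis .
  qed
  have zqIR: "z powr (-q) * IR = h"
    using zq assms(6) z0 unfolding R_def by (simp add: powr_minus field_simps)
  have hJ: "h * z powr (q-1) \<le> J"
  proof -
    have e: "(1-q) * z powr (-q) * IR = (1-q) * h" using zqIR by (simp add: mult.assoc)
    have "h \<le> q * z powr (1-q) * J + (1-q) * h" using young unfolding e .
    then have "q * h \<le> q * z powr (1-q) * J" by (simp add: algebra_simps)
    then have "q * h \<le> q * (z powr (1-q) * J)" by (simp add: mult.assoc)
    then have "h \<le> z powr (1-q) * J" using q by simp
    then have "h * z powr (q-1) \<le> z powr (1-q) * J * z powr (q-1)" using z0 by (intro mult_right_mono) auto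
    also have "\<dots> = J * (z powr (1-q) * z powr (q-1))" by simp
    also have "z powr (1-q) * z powr (q-1) = 1" using z0 by (simp add: powr_add[symmetric])
    finally show ?thesis by simp
  qed
  have Hz: "h * H_fun q z \<le> f powr q"
  proof -
    have "h * H_fun q z = (1-q) * IR + q * (h * z powr (q-1))"
      unfolding H_fun_def zq R_def using assms(6) by (simp add: field_simps)
    also have "\<dots> \<le> (1-q) * IR + q * J" using hJ q by simp
    also have "\<dots> \<le> f powr q"
    proof -
      have "(1-q) * IR \<le> (1-q) * (f powr q + q/(1-q) * (f powr q - J))"
        using IRle Xeq q by (intro mult_left_mono) auto
      also have "\<dots> = f powr q - q * J" using q by (simp add: field_simps)
      finally show ?thesis by simp
    qed
    finally show ?thesis .
  qed
  have c1: "1 \<le> f powr q / h" using assms(6,7) by simp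
  have "z powr q \<le> omega q (f powr q / h)"
    by (rule omega_bound[OF q c1 z0]) (use Hz assms(6) in \<open>simp add: field_simps\<close>)
  then have "IR \<le> h * omega q (f powr q / h)"
    using zq assms(6) unfolding R_def by (simp add: field_simps)
  then show ?thesis unfolding m_def[symmetric] IReq by (rule ennreal_leI)
qed

end
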